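(* Let $m_1,\dots,m_n$ be odd integers, each greater than $1$, and let $-1$ denote the element $(-1,\dots,-1)$ of $U=\prod_{i=1}^n\operatorname{U}_{m_i}$. The short exact sequence $1\to\{\pm1\}\to U\to U/\{\pm1\}\to 1$ splits (equivalently, $\{\pm1\}$ has a complement in $U$) if and only if there exist $1\le j\le n$ and a prime $p\equiv 3\pmod 4$ with $p\mid m_j$.
   Context: $\operatorname{U}_m$ denotes the multiplicative group of units of $\mathbb Z/m\mathbb Z$. *)

theory Defs
  imports "HOL-Number_Theory.Number_Theory" "HOL-Algebra.Product_Groups" "HOL-Algebra.Coset"
begin

definition U_mod :: "int \<Rightarrow> int monoid" where
  "U_mod m = units_of (residue_ring m)"

definition unit_prod :: "nat \<Rightarrow> (nat \<Rightarrow> int) \<Rightarrow> (nat \<Rightarrow> int) monoid" where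
  "unit_prod n m = product_group {1..n} (\<lambda>i. U_mod (m i))"

text \<open>The element (-1,...,-1) of U; -1 in Z/mZ is represented by m - 1.\<close>
definition minus_one :: "nat \<Rightarrow> (nat \<Rightarrow> int) \<Rightarrow> (nat \<Rightarrow> int)" where
  "minus_one n m = (\<lambda>i\<in>{1..n}. m i - 1)"

definition has_complement :: "('a, 'b) monoid_scheme \<Rightarrow> 'a set \<Rightarrow> bool" where
  "has_complement G K \<longleftrightarrow>
     (\<exists>H. subgroup H G \<and> H \<inter> K = {\<one>\<^bsub>G\<^esub>} \<and> H <#>\<^bsub>G\<^esub> K = carrier G)"

end

theory Submission
  imports Defs
begin


lemma legendre_m1:
  fixes p :: int
  assumes "prime p" "p > 2"
  shows "[Legendre (-1) p = (-1) ^ nat ((p - 1) div 2)] (mod p)"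
proof -
  have pr: "prime (nat p)" using assms by simp
  have "2 < nat p" using assms by simp
  note E = euler_criterion[OF pr this, of "-1"]
  have e1: "int (nat p) = p" using assms by simp
  have e2: "(nat p - 1) div 2 = nat ((p - 1) div 2)"
    using assms by (simp add: nat_div_distrib nat_diff_distrib)
  show ?thesis using E unfolding e1 e2 .
qed

lemma no_sqrt_m1:
  fixes p y :: int
  assumes "prime p" "[p = 3] (mod 4)"
  shows "\<not> [y^2 = -1] (mod p)"
proof
  assume h: "[y^2 = -1] (mod p)"
  have p2: "p > 2" using assms prime_ge_2_int[OF assms(1)] by (cases "p = 2") (auto simp: cong_def)
  have "QuadRes p (-1)" using h unfolding QuadRes_def by blast
  moreover have "\<not> [-1 = 0] (mod p)" using p2 by (auto simp: cong_def)
  ultimately have L: "Legendre (-1) p = 1" unfolding Legendre_def by auto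
  define k where "k = p div 4"
  have k: "p = 4*k + 3" using assms(2) unfolding cong_def k_def by presburger
  have "(p - 1) div 2 = 2*k+1" using k by simp
  then have "nat ((p - 1) div 2) = Suc (2 * nat k)" using p2 k by simp
  then have "(-1::int) ^ nat ((p - 1) div 2) = -1" by simp
  with legendre_m1[OF assms(1) p2] L have "[1 = -1] (mod p)" by simp
  then have "p dvd 2" by (simp add: cong_iff_dvd_diff)
  then show False using p2 by (simp add: zdvd_not_zless)
qed

lemma sqrt_m1_prime:
  fixes p :: int
  assumes "prime p" "[p = 1] (mod 4)"
  shows "\<exists>y. [y^2 = -1] (mod p)"
proof -
  have p2: "p > 2" using assms prime_ge_2_int[OF assms(1)] by (cases "p = 2") (auto simp: cong_def)
  define k where "k = p div 4"
  have k: "p = 4*k + 1" using assms(2) unfolding cong_def k_def by presburger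
  have "(p - 1) div 2 = 2*k" using k by simp
  then have "nat ((p - 1) div 2) = 2 * nat k" using p2 k by simp
  then have "(-1::int) ^ nat ((p - 1) div 2) = 1" by simp
  with legendre_m1[OF assms(1) p2] have L: "[Legendre (-1) p = 1] (mod p)" by simp
  have "\<not> [-1 = 0] (mod p)" using p2 by (auto simp: cong_def)
  moreover have "\<not> [-1 = 1] (mod p)"
  proof
    assume "[-1 = 1] (mod p)" then have "p dvd 2" by (simp add: cong_iff_dvd_diff)
    then show False using p2 by (simp add: zdvd_not_zless)
  qed
  ultimately have "QuadRes p (-1)" using L unfolding Legendre_def by (auto split: if_splits)
  then show ?thesis unfolding QuadRes_def by blast
qed

lemma sqrt_m1:
  fixes k :: nat
  assumes "odd (int k)" "\<And>p. prime p \<Longrightarrow> p dvd int k \<Longrightarrow> \<not> [p = 3] (mod 4)"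
  shows "\<exists>y. [y^2 = -1] (mod int k)"
  using assms
proof (induction k rule: less_induct)
  case (less k)
  show ?case
  proof (cases "k = 1")
    case True then show ?thesis by (auto simp: cong_def)
  next
    case False
    have k0: "k > 1" using less.prems False by (cases k) auto
    have "\<bar>int k\<bar> \<noteq> 1" using k0 by simp
    then obtain p where p: "prime p" "p dvd int k" by (rule prime_factor_int)
    from p(2) obtain m' where m': "int k = p * m'" by (rule dvdE)
    have p2: "p \<ge> 2" using prime_ge_2_int[OF p(1)] .
    have "0 < int k" using k0 by simp
    then have "0 < p * m'" unfolding m' .
    then have m'0: "m' > 0" by (rule zero_less_mult_pos) (use p2 in simp)
    have "odd (p * m')" using less.prems(1) unfolding m' .
    then have "odd p" by (simp add: even_mult_iff)
    then have p1: "[p = 1] (mod 4)" using less.prems(2)[OF p] unfolding cong_def by presburger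
    have "1 * m' < p * m'" using p2 m'0 by (intro mult_strict_right_mono) auto
    then have "m' < int k" using m' by simp
    then have "nat m' < k" using m'0 by (simp add: nat_less_iff)
    have im: "int (nat m') = m'" using m'0 by simp
    have "odd m'" using \<open>odd (p * m')\<close> by (simp add: even_mult_iff)
    then have o: "odd (int (nat m'))" using im by simp
    have q: "\<not> [q = 3] (mod 4)" if "prime q" "q dvd int (nat m')" for q
    proof -
      have "q dvd m'" using that(2) im by simp
      then have "q dvd int k" using m' by (simp add: dvd_mult)
      then show ?thesis using less.prems(2) that(1) by blast
    qed
    obtain y where y: "[y^2 = -1] (mod m')" using less.IH[OF \<open>nat m' < k\<close> o q] im by auto
    show ?thesis
    proof (cases "p dvd m'")
      case True
      have "m' dvd y^2 + 1" using y by (simp add: cong_iff_dvd_diff)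
      then obtain c where c0: "y^2 + 1 = m' * c" by (rule dvdE)
      then have c: "y^2 + 1 = c * m'" by (simp add: mult.commute)
      have ndy: "\<not> p dvd 2 * y"
      proof
        assume "p dvd 2 * y"
        then have "p dvd 2 \<or> p dvd y" using p(1) prime_dvd_mult_iff by blast
        moreover have "\<not> p dvd 2"
        proof
          assume "p dvd 2" then have "p \<le> 2" by (simp add: zdvd_imp_le)
          then show False using p2 \<open>odd p\<close> by presburger
        qed
        ultimately have "p dvd y" by blast
        have "[y^2 = -1] (mod p)" using cong_dvd_modulus[OF y True] .
        then have "p dvd y^2 + 1" by (simp add: cong_iff_dvd_diff)
        with \<open>p dvd y\<close> have "p dvd y" "p dvd y^2 + 1" by auto
        then have "p dvd y^2" "p dvd y^2 + 1" by (auto simp: power2_eq_square)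
        then have "p dvd 1" using dvd_add_right_iff by blast
        then show False using p(1) by auto
      qed
      have "coprime (2*y) p" using prime_imp_coprime[OF p(1) ndy] by (simp add: coprime_commute)
      then obtain u where u: "[2*y*u = 1] (mod p)" using cong_solve_coprime_int by blast
      define t where "t = - c * u"
      have "[2*y*u*(-c) = 1*(-c)] (mod p)" using cong_scalar_right[OF u, of "-c"] .
      then have "[2*y*t = - c] (mod p)" unfolding t_def by (simp add: ac_simps)
      then have "p dvd c + 2*y*t" by (simp add: cong_iff_dvd_diff add.commute)
      moreover have "p dvd t^2 * m'" using True by simp
      ultimately have d: "p dvd c + 2*y*t + t^2*m'" by simp
      have "(y + t*m')^2 + 1 = m' * (c + 2*y*t + t^2*m')" using c by (simp add: power2_eq_square algebra_simps)
      moreover have "p * m' dvd (c + 2*y*t + t^2*m') * m'" using mult_dvd_mono[OF d dvd_refl[of m']] .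
      ultimately have "p * m' dvd (y + t*m')^2 + 1" by (simp add: mult.commute)
      then have "[(y + t*m')^2 = -1] (mod int k)" using m' by (simp add: cong_iff_dvd_diff)
      then show ?thesis by blast
    next
      case False
      then have cp: "coprime p m'" using prime_imp_coprime[OF p(1)] by blast
      obtain r where r: "[r^2 = -1] (mod p)" using sqrt_m1_prime[OF p(1) p1] by blast
      obtain z where z: "[z = r] (mod p)" "[z = y] (mod m')" using binary_chinese_remainder_int[OF cp] by blast
      have "[z^2 = -1] (mod p)" using cong_trans[OF cong_pow[OF z(1)] r] .
      moreover have "[z^2 = -1] (mod m')" using cong_trans[OF cong_pow[OF z(2)] y] .
      ultimately have "[z^2 = -1] (mod p * m')" using cp by (rule coprime_cong_mult)
      then have "[z^2 = -1] (mod int k)" using m' by simp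
      then show ?thesis by blast
    qed
  qed
qed



lemma (in comm_group) sq_subgroup: "subgroup {y \<otimes> y | y. y \<in> carrier G} G"
proof (rule subgroupI)
  show "{y \<otimes> y | y. y \<in> carrier G} \<subseteq> carrier G" by auto
  show "{y \<otimes> y | y. y \<in> carrier G} \<noteq> {}" using one_closed by blast
next
  fix a assume "a \<in> {y \<otimes> y | y. y \<in> carrier G}"
  then obtain y where y: "y \<in> carrier G" "a = y \<otimes> y" by blast
  then have "inv a = inv y \<otimes> inv y" using inv_mult by simp
  then show "inv a \<in> {y \<otimes> y | y. y \<in> carrier G}" using y by blast
next
  fix a b assume "a \<in> {y \<otimes> y | y. y \<in> carrier G}" "b \<in> {y \<otimes> y | y. y \<in> carrier G}"
  then obtain y z where y: "y \<in> carrier G" "a = y \<otimes> y" "z \<in> carrier G" "b = z \<otimes> z" by blast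
  then have "a \<otimes> b = (y \<otimes> z) \<otimes> (y \<otimes> z)" using m_ac by simp
  then show "a \<otimes> b \<in> {y \<otimes> y | y. y \<in> carrier G}" using y by blast
qed

lemma (in comm_group) extend_subgroup:
  assumes H: "subgroup H G" and sq: "\<forall>y\<in>carrier G. y \<otimes> y \<in> H" and z: "z \<in> carrier G"
  shows "subgroup (H \<union> (\<lambda>h. z \<otimes> h) ` H) G"
proof (rule subgroupI)
  have Hc: "H \<subseteq> carrier G" using H subgroup.subset by blast
  show "H \<union> (\<lambda>h. z \<otimes> h) ` H \<subseteq> carrier G" using Hc z by auto
  show "H \<union> (\<lambda>h. z \<otimes> h) ` H \<noteq> {}" using subgroup.one_closed[OF H] by blast
next
  have Hc: "H \<subseteq> carrier G" using H subgroup.subset by blast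
  fix a assume "a \<in> H \<union> (\<lambda>h. z \<otimes> h) ` H"
  then show "inv a \<in> H \<union> (\<lambda>h. z \<otimes> h) ` H"
  proof
    assume "a \<in> H" then show ?thesis using subgroup.m_inv_closed[OF H] by blast
  next
    assume "a \<in> (\<lambda>h. z \<otimes> h) ` H"
    then obtain h where h: "h \<in> H" "a = z \<otimes> h" by blast
    have hc: "h \<in> carrier G" using h Hc by blast
    have "z \<otimes> (inv h \<otimes> (inv z \<otimes> inv z)) = inv h \<otimes> (z \<otimes> (inv z \<otimes> inv z))"
      using hc z by (simp add: m_lcomm)
    also have "\<dots> = inv h \<otimes> ((z \<otimes> inv z) \<otimes> inv z)" using hc z by (metis m_assoc inv_closed)
    also have "\<dots> = inv h \<otimes> inv z" using hc z by simp
    finally have e: "z \<otimes> (inv h \<otimes> (inv z \<otimes> inv z)) = inv h \<otimes> inv z" .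
    have "inv a = z \<otimes> (inv (z \<otimes> z) \<otimes> inv h)"
      using h hc z by (simp add: inv_mult m_ac e)
    moreover have "inv (z \<otimes> z) \<otimes> inv h \<in> H"
      using sq z h H subgroup.m_inv_closed subgroup.m_closed by (metis m_closed)
    ultimately show ?thesis by blast
  qed
next
  have Hc: "H \<subseteq> carrier G" using H subgroup.subset by blast
  fix a b assume a: "a \<in> H \<union> (\<lambda>h. z \<otimes> h) ` H" and b: "b \<in> H \<union> (\<lambda>h. z \<otimes> h) ` H"
  show "a \<otimes> b \<in> H \<union> (\<lambda>h. z \<otimes> h) ` H"
  proof (cases "a \<in> H")
    case aH: True
    show ?thesis
    proof (cases "b \<in> H")
      case True then show ?thesis using aH subgroup.m_closed[OF H] by blast
    next
      case False
      then obtain h where h: "h \<in> H" "b = z \<otimes> h" using b by blast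
      have "a \<otimes> b = z \<otimes> (a \<otimes> h)" using h aH Hc z by (simp add: m_lcomm subsetD)
      moreover have "a \<otimes> h \<in> H" using aH h subgroup.m_closed[OF H] by blast
      ultimately show ?thesis by blast
    qed
  next
    case False
    then obtain g where g: "g \<in> H" "a = z \<otimes> g" using a by blast
    have gc: "g \<in> carrier G" using g Hc by blast
    show ?thesis
    proof (cases "b \<in> H")
      case True
      have "a \<otimes> b = z \<otimes> (g \<otimes> b)" using g True Hc z by (simp add: m_assoc subsetD)
      moreover have "g \<otimes> b \<in> H" using g True subgroup.m_closed[OF H] by blast
      ultimately show ?thesis by blast
    next
      case False
      then obtain h where h: "h \<in> H" "b = z \<otimes> h" using b by blast
      have hc: "h \<in> carrier G" using h Hc by blast
      have "a \<otimes> b = (z \<otimes> z) \<otimes> (g \<otimes> h)" using g h gc hc z by (simp add: m_ac)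
      moreover have "(z \<otimes> z) \<otimes> (g \<otimes> h) \<in> H" using sq z g h subgroup.m_closed[OF H] by blast
      ultimately show ?thesis by simp
    qed
  qed
qed


lemma (in comm_group) complement_iff:
  assumes fin: "finite (carrier G)" and x: "x \<in> carrier G" "x \<noteq> \<one>" "x \<otimes> x = \<one>"
  shows "has_complement G {\<one>, x} \<longleftrightarrow> \<not> (\<exists>y\<in>carrier G. y \<otimes> y = x)"
proof
  assume "has_complement G {\<one>, x}"
  then obtain H where H: "subgroup H G" "H \<inter> {\<one>, x} = {\<one>}" "H <#> {\<one>, x} = carrier G"
    unfolding has_complement_def by blast
  show "\<not> (\<exists>y\<in>carrier G. y \<otimes> y = x)"
  proof
    assume "\<exists>y\<in>carrier G. y \<otimes> y = x"
    then obtain y where y: "y \<in> carrier G" "y \<otimes> y = x" by blast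
    then have "y \<in> H <#> {\<one>, x}" using H(3) by simp
    then obtain h k where hk: "h \<in> H" "k \<in> {\<one>, x}" "y = h \<otimes> k" by (auto simp: set_mult_def)
    have hc: "h \<in> carrier G" using hk H(1) subgroup.subset by blast
    have kc: "k \<in> carrier G" using hk x by auto
    have kk: "k \<otimes> k = \<one>" using hk x by auto
    have "y \<otimes> y = (h \<otimes> h) \<otimes> (k \<otimes> k)" unfolding hk(3) using hc kc by (simp add: m_ac)
    then have "x = (h \<otimes> h) \<otimes> (k \<otimes> k)" using y(2) by simp
    then have "x = h \<otimes> h" using kk hc by simp
    then have "x \<in> H" using subgroup.m_closed[OF H(1) hk(1) hk(1)] by simp
    then have "x \<in> H \<inter> {\<one>, x}" by simp
    then have "x \<in> {\<one>}" using H(2) by simp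
    then show False using x(2) by simp
  qed
next
  assume nsq: "\<not> (\<exists>y\<in>carrier G. y \<otimes> y = x)"
  define P where "P H \<longleftrightarrow> subgroup H G \<and> (\<forall>y\<in>carrier G. y \<otimes> y \<in> H) \<and> x \<notin> H" for H
  have s1: "subgroup {y \<otimes> y | y. y \<in> carrier G} G" by (rule sq_subgroup)
  have s2: "\<forall>y\<in>carrier G. y \<otimes> y \<in> {y \<otimes> y | y. y \<in> carrier G}" by blast
  have s3: "x \<notin> {y \<otimes> y | y. y \<in> carrier G}" using nsq by blast
  have P0: "P {y \<otimes> y | y. y \<in> carrier G}" unfolding P_def using s1 s2 s3 by blast
  have bnd: "\<forall>H. P H \<longrightarrow> card H < card (carrier G) + 1"
  proof (intro allI impI)
    fix H assume "P H"
    then have "H \<subseteq> carrier G" unfolding P_def using subgroup.subset by blast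
    then have "card H \<le> card (carrier G)" using fin card_mono by blast
    then show "card H < card (carrier G) + 1" by simp
  qed
  obtain H where PH: "P H" and Hmax: "\<forall>H'. P H' \<longrightarrow> card H' \<le> card H"
    using Lattices_Big.ex_has_greatest_nat[OF P0 bnd] by blast
  have Hs: "subgroup H G" and sq: "\<forall>y\<in>carrier G. y \<otimes> y \<in> H" and xH: "x \<notin> H"
    using PH unfolding P_def by auto
  have Hc: "H \<subseteq> carrier G" using Hs subgroup.subset by blast
  have cover: "z \<in> H \<or> x \<otimes> z \<in> H" if z: "z \<in> carrier G" for z
  proof (rule ccontr)
    assume "\<not> (z \<in> H \<or> x \<otimes> z \<in> H)"
    then have zH: "z \<notin> H" and xzH: "x \<otimes> z \<notin> H" by auto
    define H' where "H' = H \<union> (\<lambda>h. z \<otimes> h) ` H"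
    have sH': "subgroup H' G" unfolding H'_def by (rule extend_subgroup[OF Hs sq z])
    have "x \<notin> H'"
    proof
      assume "x \<in> H'"
      then obtain h where h: "h \<in> H" "x = z \<otimes> h" using xH unfolding H'_def by blast
      have hc: "h \<in> carrier G" using h Hc by blast
      have "x \<otimes> z = (z \<otimes> z) \<otimes> h" using h hc z by (simp add: m_ac)
      moreover have "(z \<otimes> z) \<otimes> h \<in> H" using subgroup.m_closed[OF Hs bspec[OF sq z] h(1)] .
      ultimately show False using xzH by simp
    qed
    moreover have "\<forall>y\<in>carrier G. y \<otimes> y \<in> H'" using sq unfolding H'_def by blast
    ultimately have "P H'" using sH' unfolding P_def by blast
    moreover have "H \<subset> H'"
    proof -
      have "z \<otimes> \<one> \<in> H'" unfolding H'_def using subgroup.one_closed[OF Hs] by blast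
      then have "z \<in> H'" using z by simp
      moreover have "H \<subseteq> H'" unfolding H'_def by (rule Un_upper1)
      ultimately show ?thesis using zH by blast
    qed
    moreover have "finite H'" using finite_subset[OF subgroup.subset[OF sH'] fin] .
    ultimately have "card H < card H'" "card H' \<le> card H" using psubset_card_mono Hmax by (blast, blast)
    then show False by simp
  qed
  show "has_complement G {\<one>, x}" unfolding has_complement_def
  proof (intro exI conjI)
    show "subgroup H G" by (rule Hs)
    show "H \<inter> {\<one>, x} = {\<one>}" using subgroup.one_closed[OF Hs] xH by auto
    show "H <#> {\<one>, x} = carrier G"
    proof
      show "H <#> {\<one>, x} \<subseteq> carrier G" unfolding set_mult_def using Hc x by auto
    next
      show "carrier G \<subseteq> H <#> {\<one>, x}"
      proof
        fix z assume z: "z \<in> carrier G"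
        show "z \<in> H <#> {\<one>, x}"
        proof (cases "z \<in> H")
          case True
          have "z \<otimes> \<one> \<in> H <#> {\<one>, x}" unfolding set_mult_def by (rule UN_I[OF True], rule UN_I[of \<one>]) auto
          then show ?thesis using z by simp
        next
          case False
          then have xz: "x \<otimes> z \<in> H" using cover[OF z] by blast
          have "(x \<otimes> z) \<otimes> x = x \<otimes> (x \<otimes> z)" using x z by (simp add: m_comm)
          also have "\<dots> = (x \<otimes> x) \<otimes> z" using x(1) z by (simp only: m_assoc)
          also have "\<dots> = z" using z by (simp only: x(3) l_one)
          finally have e: "(x \<otimes> z) \<otimes> x = z" .
          have "(x \<otimes> z) \<otimes> x \<in> H <#> {\<one>, x}" unfolding set_mult_def by (rule UN_I[OF xz], rule UN_I[of x]) auto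
          then show ?thesis using e by simp
        qed
      qed
    qed
  qed
qed



lemma U_mod_carrier: "m > 1 \<Longrightarrow> carrier (U_mod m) = {x. 0 < x \<and> x < m \<and> coprime x m}"
proof -
  assume "m > 1"
  then have r: "residues m" by (rule residues.intro)
  show ?thesis unfolding U_mod_def units_of_carrier using residues.res_units_eq[OF r] by simp
qed

lemma U_mod_mult: "x \<otimes>\<^bsub>U_mod m\<^esub> y = (x * y) mod m"
  by (simp add: U_mod_def units_of_def residue_ring_def)

lemma U_mod_one: "\<one>\<^bsub>U_mod m\<^esub> = 1"
  by (simp add: U_mod_def units_of_def residue_ring_def)

lemma U_mod_comm_group: "m > 1 \<Longrightarrow> comm_group (U_mod m)"
proof -
  assume "m > 1"
  then have r: "residues m" by (rule residues.intro)
  show ?thesis unfolding U_mod_def using comm_monoid.units_comm_group[OF residues.comm_monoid[OF r]] .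
qed

lemma minus1_mod: "(m::int) > 1 \<Longrightarrow> (-1) mod m = m - 1"
proof -
  assume m: "m > 1"
  have "[-1 = m - 1] (mod m)" by (simp add: cong_iff_dvd_diff)
  then have "(-1) mod m = (m - 1) mod m" by (simp add: cong_def)
  also have "\<dots> = m - 1" using m by (intro mod_pos_pos_trivial) auto
  finally show ?thesis .
qed

lemma sq_minus1_mod: "(m::int) > 1 \<Longrightarrow> ((m - 1) * (m - 1)) mod m = 1"
proof -
  assume m: "m > 1"
  have "(m - 1) * (m - 1) = 1 + (m - 2) * m" by (simp add: algebra_simps)
  then have "((m - 1) * (m - 1)) mod m = (1 + (m - 2) * m) mod m" by simp
  also have "\<dots> = 1 mod m" by (rule mod_mult_self1)
  also have "\<dots> = 1" using m by simp
  finally show ?thesis .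
qed

lemma unit_prod_carrier: "(\<And>i. i \<in> {1..n} \<Longrightarrow> m i > 1) \<Longrightarrow>
  carrier (unit_prod n m) = (\<Pi>\<^sub>E i\<in>{1..n}. {x. 0 < x \<and> x < m i \<and> coprime x (m i)})"
  unfolding unit_prod_def carrier_product_group using U_mod_carrier by (intro PiE_cong) auto

lemma unit_prod_mult: "f \<otimes>\<^bsub>unit_prod n m\<^esub> g = (\<lambda>i\<in>{1..n}. (f i * g i) mod m i)"
  unfolding unit_prod_def mult_product_group U_mod_mult ..

lemma unit_prod_one: "\<one>\<^bsub>unit_prod n m\<^esub> = (\<lambda>i\<in>{1..n}. 1)"
  unfolding unit_prod_def one_product_group U_mod_one ..

lemma unit_prod_comm_group:
  assumes "\<And>i. i \<in> {1..n} \<Longrightarrow> m i > 1"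
  shows "comm_group (unit_prod n m)"
proof -
  have g: "group (unit_prod n m)" unfolding unit_prod_def
    by (rule product_group) (use assms U_mod_comm_group comm_group.axioms(2) in blast)
  show ?thesis
  proof (rule group.group_comm_groupI[OF g])
    fix f g assume "f \<in> carrier (unit_prod n m)" "g \<in> carrier (unit_prod n m)"
    show "f \<otimes>\<^bsub>unit_prod n m\<^esub> g = g \<otimes>\<^bsub>unit_prod n m\<^esub> f"
      unfolding unit_prod_mult by (intro restrict_ext) (simp add: mult.commute)
  qed
qed

lemma unit_prod_finite:
  assumes "\<And>i. i \<in> {1..n} \<Longrightarrow> m i > 1"
  shows "finite (carrier (unit_prod n m))"
proof -
  have "finite (\<Pi>\<^sub>E i\<in>{1..n}. {x. 0 < x \<and> x < m i \<and> coprime x (m i)})"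
  proof (rule finite_PiE)
    fix i
    have "{x. 0 < x \<and> x < m i \<and> coprime x (m i)} \<subseteq> {0..m i}" by auto
    then show "finite {x. 0 < x \<and> x < m i \<and> coprime x (m i)}" using finite_subset by blast
  qed simp
  then show ?thesis using unit_prod_carrier[OF assms] by simp
qed

theorem lemma4p2:
  fixes n :: nat and m :: "nat \<Rightarrow> int"
  assumes "n \<ge> 1"
    and "\<And>i. i \<in> {1..n} \<Longrightarrow> odd (m i) \<and> m i > 1"
  shows "has_complement (unit_prod n m) {\<one>\<^bsub>unit_prod n m\<^esub>, minus_one n m}
     \<longleftrightarrow> (\<exists>j\<in>{1..n}. \<exists>p::int. prime p \<and> [p = 3] (mod 4) \<and> p dvd m j)"
proof -
  let ?G = "unit_prod n m" and ?x = "minus_one n m" and ?I = "{1..n}"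
  have m1: "\<And>i. i \<in> {1..n} \<Longrightarrow> m i > 1" using assms(2) by blast
  have cG: "comm_group ?G" by (rule unit_prod_comm_group[OF m1])
  have fin: "finite (carrier ?G)" by (rule unit_prod_finite[OF m1])
  note car = unit_prod_carrier[OF m1]
  have xc0: "\<forall>i\<in>{1..n}. m i - 1 \<in> {x. 0 < x \<and> x < m i \<and> coprime x (m i)}" using m1 by simp
  have "?x \<in> (\<Pi>\<^sub>E i\<in>{1..n}. {x. 0 < x \<and> x < m i \<and> coprime x (m i)})"
    unfolding minus_one_def using xc0 by (simp only: restrict_PiE_iff)
  then have xc: "?x \<in> carrier ?G" using car by simp
  have x1: "?x \<noteq> \<one>\<^bsub>?G\<^esub>"
  proof
    assume "?x = \<one>\<^bsub>?G\<^esub>"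
    then have "?x 1 = \<one>\<^bsub>?G\<^esub> 1" by simp
    moreover have i1: "(1::nat) \<in> {1..n}" using assms(1) by simp
    ultimately have "m 1 - 1 = 1" unfolding minus_one_def unit_prod_one by simp
    then have "m 1 = 2" by simp
    then show False using assms(2)[OF i1] by simp
  qed
  have xx: "?x \<otimes>\<^bsub>?G\<^esub> ?x = \<one>\<^bsub>?G\<^esub>"
    unfolding unit_prod_mult unit_prod_one
  proof (rule restrict_ext)
    fix i assume i: "i \<in> {1..n}"
    show "?x i * ?x i mod m i = 1" unfolding minus_one_def using i sq_minus1_mod[OF m1[OF i]] by simp
  qed
  have step1: "has_complement ?G {\<one>\<^bsub>?G\<^esub>, ?x} \<longleftrightarrow> \<not> (\<exists>y\<in>carrier ?G. y \<otimes>\<^bsub>?G\<^esub> y = ?x)"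
    by (rule comm_group.complement_iff[OF cG fin xc x1 xx])
  have step2: "(\<exists>y\<in>carrier ?G. y \<otimes>\<^bsub>?G\<^esub> y = ?x) \<longleftrightarrow> (\<forall>i\<in>?I. \<exists>z. [z^2 = -1] (mod m i))"
  proof
    assume "\<exists>y\<in>carrier ?G. y \<otimes>\<^bsub>?G\<^esub> y = ?x"
    then obtain y where y: "y \<in> carrier ?G" "y \<otimes>\<^bsub>?G\<^esub> y = ?x" by blast
    show "\<forall>i\<in>?I. \<exists>z. [z^2 = -1] (mod m i)"
    proof
      fix i assume i: "i \<in> ?I"
      have "(y \<otimes>\<^bsub>?G\<^esub> y) i = ?x i" using y(2) by simp
      then have "(y i * y i) mod m i = m i - 1" using i unfolding unit_prod_mult minus_one_def by simp
      then have "(y i ^ 2) mod m i = (-1) mod m i" using minus1_mod[OF m1[OF i]] by (simp add: power2_eq_square)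
      then show "\<exists>z. [z^2 = -1] (mod m i)" unfolding cong_def by blast
    qed
  next
    assume "\<forall>i\<in>?I. \<exists>z. [z^2 = -1] (mod m i)"
    from bchoice[OF this] obtain f where f: "\<forall>i\<in>?I. [f i ^ 2 = -1] (mod m i)" by blast
    define y where "y = (\<lambda>i\<in>?I. f i mod m i)"
    have cop: "coprime (f i) (m i)" if i: "i \<in> ?I" for i
    proof -
      have d: "m i dvd f i ^ 2 + 1" using bspec[OF f i] by (simp add: cong_iff_dvd_diff)
      have eq: "f i * (- f i) - 1 = - (f i ^ 2 + 1)" by (simp add: power2_eq_square)
      have "m i dvd f i * (- f i) - 1" unfolding eq using d by (simp only: dvd_minus_iff)
      then have "[f i * (- f i) = 1] (mod m i)" by (simp add: cong_iff_dvd_diff)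
      then show ?thesis using coprime_iff_invertible_int by blast
    qed
    have yc0: "\<forall>i\<in>?I. f i mod m i \<in> {x. 0 < x \<and> x < m i \<and> coprime x (m i)}"
    proof
      fix i assume i: "i \<in> ?I"
      have mi: "m i > 1" using m1[OF i] .
      have c: "coprime (f i mod m i) (m i)" using cop[OF i] mi by (simp add: coprime_mod_left_iff)
      have "f i mod m i \<noteq> 0"
      proof
        assume "f i mod m i = 0"
        then have "coprime 0 (m i)" using c by simp
        then show False using mi by simp
      qed
      moreover have "0 \<le> f i mod m i" "f i mod m i < m i" using mi by simp_all
      ultimately show "f i mod m i \<in> {x. 0 < x \<and> x < m i \<and> coprime x (m i)}" using c by simp
    qed
    have "y \<in> (\<Pi>\<^sub>E i\<in>{1..n}. {x. 0 < x \<and> x < m i \<and> coprime x (m i)})"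
      unfolding y_def using yc0 by (simp only: restrict_PiE_iff)
    then have yc: "y \<in> carrier ?G" using car by simp
    have "y \<otimes>\<^bsub>?G\<^esub> y = ?x"
      unfolding unit_prod_mult minus_one_def
    proof (rule restrict_ext)
      fix i assume i: "i \<in> ?I"
      have "(y i * y i) mod m i = (f i mod m i * (f i mod m i)) mod m i" unfolding y_def using i by simp
      also have "\<dots> = (f i ^ 2) mod m i" by (simp add: mod_mult_eq power2_eq_square)
      also have "\<dots> = (-1) mod m i" using bspec[OF f i] by (simp add: cong_def)
      also have "\<dots> = m i - 1" using minus1_mod[OF m1[OF i]] .
      finally show "(y i * y i) mod m i = m i - 1" .
    qed
    then show "\<exists>y\<in>carrier ?G. y \<otimes>\<^bsub>?G\<^esub> y = ?x" using yc by blast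
  qed
  have step3: "(\<forall>i\<in>?I. \<exists>z. [z^2 = -1] (mod m i)) \<longleftrightarrow>
      \<not> (\<exists>j\<in>?I. \<exists>p::int. prime p \<and> [p = 3] (mod 4) \<and> p dvd m j)"
  proof
    assume A: "\<forall>i\<in>?I. \<exists>z. [z^2 = -1] (mod m i)"
    show "\<not> (\<exists>j\<in>?I. \<exists>p::int. prime p \<and> [p = 3] (mod 4) \<and> p dvd m j)"
    proof
      assume "\<exists>j\<in>?I. \<exists>p::int. prime p \<and> [p = 3] (mod 4) \<and> p dvd m j"
      then obtain j p where j: "j \<in> ?I" "prime p" "[p = 3] (mod 4)" "p dvd m j" by blast
      obtain z where "[z^2 = -1] (mod m j)" using bspec[OF A j(1)] by blast
      then have "[z^2 = -1] (mod p)" using cong_dvd_modulus[OF _ j(4)] by blast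
      then show False using no_sqrt_m1[OF j(2) j(3)] by blast
    qed
  next
    assume B: "\<not> (\<exists>j\<in>?I. \<exists>p::int. prime p \<and> [p = 3] (mod 4) \<and> p dvd m j)"
    show "\<forall>i\<in>?I. \<exists>z. [z^2 = -1] (mod m i)"
    proof
      fix i assume i: "i \<in> ?I"
      have mi: "int (nat (m i)) = m i" using m1[OF i] by simp
      have o: "odd (int (nat (m i)))" using assms(2)[OF i] mi by simp
      have q: "\<not> [p = 3] (mod 4)" if "prime p" "p dvd int (nat (m i))" for p
        using B i mi that by auto
      have "\<exists>y. [y^2 = -1] (mod int (nat (m i)))" by (rule sqrt_m1[OF o q])
      then show "\<exists>z. [z^2 = -1] (mod m i)" using mi by simp
    qed
  qed
  show ?thesis by (simp only: step1 step2 step3 not_not)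
qed

end
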